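(* Let $F_0$ be a totally real number field of degree $r$, with real embeddings $v_1,\dots,v_r$, and fix an extension of $v_1$ to an embedding $\overline{F}_0\hookrightarrow\mathbb{C}$, through which all finite extensions of $F_0$ inside $\overline{F}_0$ are regarded as subfields of $\mathbb{C}$. Let $F$ be a totally real quadratic extension of $F_0$, with $\mathrm{Gal}(F/F_0)=\{1,\tau\}$. Let $\alpha\in F$ be such that $M=F(\sqrt{\alpha})$ is an almost totally complex (ATC) quadratic extension of $F$ which is real under $v_1$. Let $K=F_0(\sqrt{\alpha\alpha^\tau})$, where $\sqrt{\alpha\alpha^\tau}=\sqrt{\alpha}\sqrt{\alpha^\tau}$, and let $L=K(\sqrt{\alpha}+\sqrt{\alpha^\tau})$ and $L'=K(\sqrt{\alpha}-\sqrt{\alpha^\tau})$. Then $K$ is an almost totally real (ATR) extension of $F_0$ which is complex under $v_1$, and the fields $L$ and $L'$ are totally imaginary.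
   Context: A quadratic extension $M/F$ of a totally real field $F$ is almost totally complex (ATC) if all archimedean places of $F$ but exactly one extend to a complex place of $M$ (so $M$ has exactly two real places). A quadratic extension $K/F_0$ of a totally real field $F_0$ is almost totally real (ATR) if exactly one real place of $F_0$ extends to a complex place of $K$, all others extending to pairs of real places. "$M$ real under $v_1$" means the fixed embedding extending $v_1$ maps $M$ into $\mathbb{R}$. The fields $K$, $L$, $L'$ are subfields of the Galois closure $\mathcal{M}=F(\sqrt{\alpha},\sqrt{\alpha^\tau})$ of $M/F_0$, whose Galois group over $F_0$ is dihedral of order $8$. *)

theory Defs
  imports Complex_Main "HOL-Library.FuncSet"
begin

text \<open>All number fields are regarded as subfields of the complex numbers, via a
fixed embedding extending the real place v1.\<close>

definition subfield :: "complex set \<Rightarrow> bool" where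
  "subfield S \<longleftrightarrow> 0 \<in> S \<and> 1 \<in> S \<and>
     (\<forall>x\<in>S. \<forall>y\<in>S. x + y \<in> S \<and> x * y \<in> S) \<and>
     (\<forall>x\<in>S. - x \<in> S) \<and> (\<forall>x\<in>S. x \<noteq> 0 \<longrightarrow> inverse x \<in> S)"

definition gen_field :: "complex set \<Rightarrow> complex set" where
  "gen_field A = \<Inter>{T. subfield T \<and> A \<subseteq> T}"

definition adjoin :: "complex set \<Rightarrow> complex \<Rightarrow> complex set" where
  "adjoin F x = gen_field (insert x F)"

definition is_basis :: "complex set \<Rightarrow> complex set \<Rightarrow> complex set \<Rightarrow> bool" where
  "is_basis F M B \<longleftrightarrow> finite B \<and> B \<subseteq> M \<and>
     (\<forall>x\<in>M. \<exists>c. (\<forall>b\<in>B. c b \<in> F) \<and> x = (\<Sum>b\<in>B. c b * b)) \<and>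
     (\<forall>c. (\<forall>b\<in>B. c b \<in> F) \<and> (\<Sum>b\<in>B. c b * b) = 0 \<longrightarrow> (\<forall>b\<in>B. c b = 0))"

definition ext_degree :: "complex set \<Rightarrow> complex set \<Rightarrow> nat \<Rightarrow> bool" where
  "ext_degree F M n \<longleftrightarrow> subfield F \<and> subfield M \<and> F \<subseteq> M \<and>
     (\<exists>B. is_basis F M B \<and> card B = n)"

definition quadratic_ext :: "complex set \<Rightarrow> complex set \<Rightarrow> bool" where
  "quadratic_ext F M \<longleftrightarrow> ext_degree F M 2"

definition emb :: "complex set \<Rightarrow> (complex \<Rightarrow> complex) set" where
  "emb S = {\<sigma> \<in> extensional S. \<sigma> 1 = 1 \<and>
     (\<forall>x\<in>S. \<forall>y\<in>S. \<sigma> (x + y) = \<sigma> x + \<sigma> y \<and> \<sigma> (x * y) = \<sigma> x * \<sigma> y)}"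

definition real_emb :: "complex set \<Rightarrow> (complex \<Rightarrow> complex) \<Rightarrow> bool" where
  "real_emb S \<sigma> \<longleftrightarrow> \<sigma> ` S \<subseteq> \<real>"

definition number_field :: "complex set \<Rightarrow> nat \<Rightarrow> bool" where
  "number_field S r \<longleftrightarrow> ext_degree \<rat> S r"

definition totally_real :: "complex set \<Rightarrow> bool" where
  "totally_real S \<longleftrightarrow> (\<forall>\<sigma>\<in>emb S. real_emb S \<sigma>)"

definition totally_imaginary :: "complex set \<Rightarrow> bool" where
  "totally_imaginary S \<longleftrightarrow> (\<forall>\<sigma>\<in>emb S. \<not> real_emb S \<sigma>)"

definition extends_complex :: "complex set \<Rightarrow> complex set \<Rightarrow> (complex \<Rightarrow> complex) \<Rightarrow> bool" where
  "extends_complex F M v \<longleftrightarrow>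
     (\<exists>\<sigma>\<in>emb M. restrict \<sigma> F = v \<and> \<not> real_emb M \<sigma>)"

definition ATC :: "complex set \<Rightarrow> complex set \<Rightarrow> bool" where
  "ATC F M \<longleftrightarrow> totally_real F \<and> quadratic_ext F M \<and>
     (\<exists>!v. v \<in> emb F \<and> \<not> extends_complex F M v)"

text \<open>Almost totally real: exactly one real place of F0 extends to a complex place of K
(all others therefore extend to pairs of real places).\<close>
definition ATR :: "complex set \<Rightarrow> complex set \<Rightarrow> bool" where
  "ATR F0 K \<longleftrightarrow> totally_real F0 \<and> quadratic_ext F0 K \<and>
     (\<exists>!v. v \<in> emb F0 \<and> extends_complex F0 K v)"

end

theory Submission
  imports Defs
begin


lemma subfield_diff: "subfield S \<Longrightarrow> x \<in> S \<Longrightarrow> y \<in> S \<Longrightarrow> x - y \<in> S"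
  unfolding subfield_def by (metis diff_conv_add_uminus)
lemma subfield_add: "subfield S \<Longrightarrow> x \<in> S \<Longrightarrow> y \<in> S \<Longrightarrow> x + y \<in> S"
  unfolding subfield_def by blast
lemma subfield_mult: "subfield S \<Longrightarrow> x \<in> S \<Longrightarrow> y \<in> S \<Longrightarrow> x * y \<in> S"
  unfolding subfield_def by blast
lemma subfield_0: "subfield S \<Longrightarrow> 0 \<in> S" unfolding subfield_def by blast
lemma subfield_1: "subfield S \<Longrightarrow> 1 \<in> S" unfolding subfield_def by blast
lemma subfield_uminus: "subfield S \<Longrightarrow> x \<in> S \<Longrightarrow> -x \<in> S" unfolding subfield_def by blast
lemma subfield_inverse: "subfield S \<Longrightarrow> x \<in> S \<Longrightarrow> inverse x \<in> S"
  unfolding subfield_def by (cases "x = 0") auto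
lemma subfield_divide: "subfield S \<Longrightarrow> x \<in> S \<Longrightarrow> y \<in> S \<Longrightarrow> x / y \<in> S"
  by (simp add: divide_inverse subfield_inverse subfield_mult)
lemma subfield_2: "subfield S \<Longrightarrow> 2 \<in> S"
  using subfield_add[of S 1 1] subfield_1 by (simp add: one_add_one)

lemma subfield_gen: "subfield (gen_field A)"
  unfolding gen_field_def subfield_def by blast
lemma gen_field_sub: "A \<subseteq> gen_field A"
  unfolding gen_field_def by blast
lemma gen_field_least: "subfield T \<Longrightarrow> A \<subseteq> T \<Longrightarrow> gen_field A \<subseteq> T"
  unfolding gen_field_def by blast

lemma adjoin_sub: "F \<subseteq> adjoin F x" "x \<in> adjoin F x" "subfield (adjoin F x)"
  unfolding adjoin_def using gen_field_sub[of "insert x F"] subfield_gen by auto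

lemma emb_1: "\<sigma> \<in> emb S \<Longrightarrow> \<sigma> 1 = 1" unfolding emb_def by blast
lemma emb_add: "\<sigma> \<in> emb S \<Longrightarrow> x \<in> S \<Longrightarrow> y \<in> S \<Longrightarrow> \<sigma> (x + y) = \<sigma> x + \<sigma> y"
  unfolding emb_def by blast
lemma emb_mult: "\<sigma> \<in> emb S \<Longrightarrow> x \<in> S \<Longrightarrow> y \<in> S \<Longrightarrow> \<sigma> (x * y) = \<sigma> x * \<sigma> y"
  unfolding emb_def by blast
lemma emb_ext: "\<sigma> \<in> emb S \<Longrightarrow> \<sigma> \<in> extensional S"
  unfolding emb_def by blast
lemma emb_0: "subfield S \<Longrightarrow> \<sigma> \<in> emb S \<Longrightarrow> \<sigma> 0 = 0"
proof -
  assume a: "subfield S" "\<sigma> \<in> emb S"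
  have "\<sigma> (0 + 0) = \<sigma> 0 + \<sigma> 0" using emb_add[OF a(2)] subfield_0[OF a(1)] by blast
  thus ?thesis by simp
qed
lemma emb_uminus: "subfield S \<Longrightarrow> \<sigma> \<in> emb S \<Longrightarrow> x \<in> S \<Longrightarrow> \<sigma> (-x) = - \<sigma> x"
proof -
  assume a: "subfield S" "\<sigma> \<in> emb S" "x \<in> S"
  have "\<sigma> (x + - x) = \<sigma> x + \<sigma> (-x)" using emb_add[OF a(2) a(3)] subfield_uminus[OF a(1,3)] by blast
  hence "\<sigma> x + \<sigma> (-x) = 0" using emb_0[OF a(1,2)] by simp
  thus ?thesis by (simp add: add_eq_0_iff2)
qed
lemma emb_diff: "subfield S \<Longrightarrow> \<sigma> \<in> emb S \<Longrightarrow> x \<in> S \<Longrightarrow> y \<in> S \<Longrightarrow> \<sigma> (x - y) = \<sigma> x - \<sigma> y"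
proof -
  assume a: "subfield S" "\<sigma> \<in> emb S" "x \<in> S" "y \<in> S"
  have "\<sigma> (x + - y) = \<sigma> x + \<sigma> (-y)" using emb_add[OF a(2) a(3)] subfield_uminus[OF a(1,4)] by blast
  thus ?thesis using emb_uminus[OF a(1,2,4)] by simp
qed
lemma emb_inverse: "subfield S \<Longrightarrow> \<sigma> \<in> emb S \<Longrightarrow> x \<in> S \<Longrightarrow> x \<noteq> 0 \<Longrightarrow> \<sigma> (inverse x) = inverse (\<sigma> x)"
proof -
  assume a: "subfield S" "\<sigma> \<in> emb S" "x \<in> S" "x \<noteq> 0"
  have "\<sigma> (x * inverse x) = \<sigma> x * \<sigma> (inverse x)" using emb_mult[OF a(2) a(3)] subfield_inverse[OF a(1,3)] by blast
  hence "\<sigma> x * \<sigma> (inverse x) = 1" using a(4) emb_1[OF a(2)] by simp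
  thus ?thesis by (rule inverse_unique[symmetric])
qed
lemma emb_nonzero: "subfield S \<Longrightarrow> \<sigma> \<in> emb S \<Longrightarrow> x \<in> S \<Longrightarrow> x \<noteq> 0 \<Longrightarrow> \<sigma> x \<noteq> 0"
proof -
  assume a: "subfield S" "\<sigma> \<in> emb S" "x \<in> S" "x \<noteq> 0"
  have "\<sigma> (x * inverse x) = \<sigma> x * \<sigma> (inverse x)" using emb_mult[OF a(2) a(3)] subfield_inverse[OF a(1,3)] by blast
  hence "\<sigma> x * \<sigma> (inverse x) = 1" using a(4) emb_1[OF a(2)] by simp
  thus ?thesis by auto
qed
lemma emb_inj: "subfield S \<Longrightarrow> \<sigma> \<in> emb S \<Longrightarrow> x \<in> S \<Longrightarrow> y \<in> S \<Longrightarrow> \<sigma> x = \<sigma> y \<Longrightarrow> x = y"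
proof (rule ccontr)
  assume a: "subfield S" "\<sigma> \<in> emb S" "x \<in> S" "y \<in> S" "\<sigma> x = \<sigma> y" "x \<noteq> y"
  have "\<sigma> (x - y) \<noteq> 0" using emb_nonzero[OF a(1,2) subfield_diff[OF a(1,3,4)]] a(6) by simp
  thus False using emb_diff[OF a(1-4)] a(5) by simp
qed

lemma restrict_emb: "\<sigma> \<in> emb T \<Longrightarrow> S \<subseteq> T \<Longrightarrow> 1 \<in> S \<Longrightarrow> subfield S \<Longrightarrow> restrict \<sigma> S \<in> emb S"
  unfolding emb_def subfield_def by (auto simp: subset_iff)
lemma id_emb: "subfield S \<Longrightarrow> restrict (\<lambda>x. x) S \<in> emb S"
  unfolding emb_def subfield_def by auto

lemma real_gen: "\<sigma> \<in> emb (gen_field A) \<Longrightarrow> (\<forall>x\<in>A. \<sigma> x \<in> \<real>) \<Longrightarrow> real_emb (gen_field A) \<sigma>"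
proof -
  assume e: "\<sigma> \<in> emb (gen_field A)" and r: "\<forall>x\<in>A. \<sigma> x \<in> \<real>"
  let ?G = "gen_field A"
  let ?T = "{x \<in> ?G. \<sigma> x \<in> \<real>}"
  have sg: "subfield ?G" by (rule subfield_gen)
  have "subfield ?T"
    unfolding subfield_def
  proof (intro conjI ballI impI)
    show "0 \<in> ?T" using emb_0[OF sg e] subfield_0[OF sg] by auto
    show "1 \<in> ?T" using emb_1[OF e] subfield_1[OF sg] by auto
    fix x y assume x: "x \<in> ?T" and y: "y \<in> ?T"
    show "x + y \<in> ?T" using x y sg emb_add[OF e] subfield_add by (auto simp: Reals_add)
    show "x * y \<in> ?T" using x y sg emb_mult[OF e] subfield_mult by (auto simp: Reals_mult)
  next
    fix x assume x: "x \<in> ?T"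
    show "-x \<in> ?T" using x sg emb_uminus[OF sg e] subfield_uminus by (auto simp: Reals_minus)
    assume "x \<noteq> 0"
    thus "inverse x \<in> ?T" using x sg emb_inverse[OF sg e] subfield_inverse by (auto simp: Reals_inverse)
  qed
  moreover have "A \<subseteq> ?T" using gen_field_sub r by blast
  ultimately have "?G \<subseteq> ?T" by (rule gen_field_least)
  thus ?thesis unfolding real_emb_def by blast
qed

lemma totally_real_sub: "subfield S \<Longrightarrow> totally_real S \<Longrightarrow> S \<subseteq> \<real>"
  using id_emb unfolding totally_real_def real_emb_def by force

lemma real_sq_nonneg: "z \<in> \<real> \<Longrightarrow> z * z \<in> \<real> \<and> Re (z*z) \<ge> 0"
  by (auto elim!: Reals_cases)

lemma sq_real_nonneg: "z * z \<in> \<real> \<Longrightarrow> Re (z * z) \<ge> 0 \<Longrightarrow> z \<in> \<real>"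
proof -
  assume a: "z * z \<in> \<real>" "Re (z*z) \<ge> 0"
  have "Im (z*z) = 0" using a(1) by (simp add: complex_is_Real_iff)
  hence h: "Re z * Im z = 0" by auto
  have h2: "Re z * Re z - Im z * Im z \<ge> 0" using a(2) by simp
  have "Im z = 0"
  proof (cases "Re z = 0")
    case True
    hence "Im z * Im z \<le> 0" using h2 by simp
    thus ?thesis by (auto simp: mult_le_0_iff)
  next
    case False thus ?thesis using h by simp
  qed
  thus ?thesis by (simp add: complex_is_Real_iff)
qed

lemma neg_arith: fixes r1 r2 c :: real
  assumes "r1 < 0" "r2 < 0" "c * c = r1 * r2" "r1 + r2 + 2 * c \<ge> 0" shows "r1 = r2"
proof -
  define u where "u = -(r1+r2)"
  have u0: "u \<ge> 0" using assms unfolding u_def by linarith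
  have c0: "2*c \<ge> u" using assms unfolding u_def by linarith
  have "u * u \<le> (2*c)*(2*c)" using mult_mono[OF c0 c0] u0 c0 by linarith
  moreover have "(r1 - r2)*(r1-r2) = u*u - (2*c)*(2*c)" unfolding u_def using assms(3)
    by (simp add: algebra_simps)
  ultimately have "(r1 - r2)*(r1-r2) \<le> 0" by linarith
  hence "r1 - r2 = 0" by (auto simp: mult_le_0_iff)
  thus ?thesis by simp
qed



locale setting =
  fixes F0 F :: "complex set" and \<tau> :: "complex \<Rightarrow> complex" and \<alpha> :: complex
  assumes sF0: "subfield F0" and sF: "subfield F" and sub: "F0 \<subseteq> F"
    and trF0: "totally_real F0" and trF: "totally_real F"
    and basis: "\<exists>B. is_basis F0 F B \<and> card B = 2"
    and tau: "\<tau> \<in> emb F" "\<tau> ` F = F" "\<forall>x\<in>F0. \<tau> x = x" "\<exists>x\<in>F. \<tau> x \<noteq> x"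
    and alpha: "\<alpha> \<in> F"
    and atc: "ATC F (adjoin F (csqrt \<alpha>))" and Mreal: "adjoin F (csqrt \<alpha>) \<subseteq> \<real>"
begin

lemma tauF: "x \<in> F \<Longrightarrow> \<tau> x \<in> F" using tau(2) by blast
lemma tau_add: "x \<in> F \<Longrightarrow> y \<in> F \<Longrightarrow> \<tau> (x + y) = \<tau> x + \<tau> y" using emb_add[OF tau(1)] .
lemma tau_mult: "x \<in> F \<Longrightarrow> y \<in> F \<Longrightarrow> \<tau> (x * y) = \<tau> x * \<tau> y" using emb_mult[OF tau(1)] .
lemma tau_diff: "x \<in> F \<Longrightarrow> y \<in> F \<Longrightarrow> \<tau> (x - y) = \<tau> x - \<tau> y" using emb_diff[OF sF tau(1)] .

lemma quad: "x \<in> F \<Longrightarrow> \<exists>t d. t \<in> F0 \<and> d \<in> F0 \<and> x * x + d = t * x"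
proof -
  assume x: "x \<in> F"
  obtain B where B: "is_basis F0 F B" "card B = 2" using basis by blast
  then obtain b1 b2 where b: "B = {b1, b2}" "b1 \<noteq> b2" by (meson card_2_iff)
  have bF: "b1 \<in> F" "b2 \<in> F" using B(1) b unfolding is_basis_def by auto
  have b1nz: "b1 \<noteq> 0"
  proof
    assume z: "b1 = 0"
    let ?c = "\<lambda>b. if b = b1 then (1::complex) else 0"
    have h: "(\<forall>b\<in>B. ?c b \<in> F0) \<and> (\<Sum>b\<in>B. ?c b * b) = 0"
      using b z subfield_0[OF sF0] subfield_1[OF sF0] by auto
    have ind: "\<And>c. (\<forall>b\<in>B. c b \<in> F0) \<and> (\<Sum>b\<in>B. c b * b) = 0 \<Longrightarrow> \<forall>b\<in>B. c b = 0"
      using B(1) unfolding is_basis_def by blast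
    have "\<forall>b\<in>B. ?c b = 0" using ind[of ?c] h by blast
    thus False using b by auto
  qed
  have span: "\<And>y. y \<in> F \<Longrightarrow> \<exists>c1 c2. c1 \<in> F0 \<and> c2 \<in> F0 \<and> y = c1 * b1 + c2 * b2"
  proof -
    fix y assume "y \<in> F"
    then obtain c where "\<forall>b\<in>B. c b \<in> F0" "y = (\<Sum>b\<in>B. c b * b)" using B(1) unfolding is_basis_def by blast
    thus "\<exists>c1 c2. c1 \<in> F0 \<and> c2 \<in> F0 \<and> y = c1 * b1 + c2 * b2" using b by auto
  qed
  obtain a11 a21 where A1: "a11 \<in> F0" "a21 \<in> F0" "x * b1 = a11 * b1 + a21 * b2"
    using span[of "x*b1"] subfield_mult[OF sF x bF(1)] by blast
  obtain a12 a22 where A2: "a12 \<in> F0" "a22 \<in> F0" "x * b2 = a12 * b1 + a22 * b2"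
    using span[of "x*b2"] subfield_mult[OF sF x bF(2)] by blast
  have "(x - a11) * b1 = a21 * b2" using A1(3) by (simp add: algebra_simps)
  hence "(x - a22) * ((x - a11) * b1) = (x - a22) * (a21 * b2)" by simp
  also have "\<dots> = a21 * ((x - a22) * b2)" by (simp add: algebra_simps)
  also have "\<dots> = a21 * (a12 * b1)" using A2(3) by (simp add: algebra_simps)
  finally have "((x - a22) * (x - a11) - a21 * a12) * b1 = 0" by (simp add: algebra_simps)
  hence e: "(x - a22) * (x - a11) - a21 * a12 = 0" using b1nz by simp
  show ?thesis
  proof (intro exI conjI)
    show "a11 + a22 \<in> F0" using subfield_add[OF sF0 A1(1) A2(2)] .
    show "a11 * a22 - a21 * a12 \<in> F0"
      using subfield_diff[OF sF0 subfield_mult[OF sF0 A1(1) A2(2)] subfield_mult[OF sF0 A1(2) A2(1)]] .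
    show "x * x + (a11 * a22 - a21 * a12) = (a11 + a22) * x" using e by (simp add: algebra_simps)
  qed
qed

lemma nonfixed: "x \<in> F \<Longrightarrow> \<tau> x \<noteq> x \<Longrightarrow> x + \<tau> x \<in> F0 \<and> x * \<tau> x \<in> F0"
proof -
  assume x: "x \<in> F" and ne: "\<tau> x \<noteq> x"
  obtain t d where td: "t \<in> F0" "d \<in> F0" "x * x + d = t * x" using quad[OF x] by blast
  have dF: "d \<in> F" "t \<in> F" using td sub by auto
  have "\<tau> x * \<tau> x + d = \<tau> (x * x) + \<tau> d" using tau_mult[OF x x] tau(3) td by simp
  also have "\<dots> = \<tau> (x * x + d)" using tau_add[OF subfield_mult[OF sF x x] dF(1)] by simp
  also have "\<dots> = \<tau> (t * x)" using td by simp
  also have "\<dots> = t * \<tau> x" using tau_mult[OF dF(2) x] tau(3) td by simp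
  finally have e2: "\<tau> x * \<tau> x + d = t * \<tau> x" .
  have "(x - \<tau> x) * (x + \<tau> x - t) = (x*x + d) - (\<tau> x * \<tau> x + d) - t*x + t*\<tau> x"
    by (simp add: algebra_simps)
  also have "\<dots> = 0" using td(3) e2 by simp
  finally have "(x - \<tau> x) * (x + \<tau> x - t) = 0" .
  hence s: "x + \<tau> x = t" using ne by simp
  have "x * \<tau> x = x * (x + \<tau> x) - x * x" by (simp add: algebra_simps)
  also have "\<dots> = t * x - x * x" using s by (simp add: mult.commute)
  also have "\<dots> = d" using td(3) by (simp add: algebra_simps)
  finally have "x * \<tau> x = d" .
  thus ?thesis using s td by simp
qed

lemma fixed: "x \<in> F \<Longrightarrow> \<tau> x = x \<Longrightarrow> x \<in> F0"
proof -
  assume x: "x \<in> F" and f: "\<tau> x = x"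
  obtain x0 where x0: "x0 \<in> F" "\<tau> x0 \<noteq> x0" using tau(4) by blast
  have y: "x + x0 \<in> F" using subfield_add[OF sF x x0(1)] .
  have "\<tau> (x + x0) \<noteq> x + x0" using tau_add[OF x x0(1)] f x0(2) by simp
  hence "(x + x0) + \<tau> (x + x0) \<in> F0" using nonfixed[OF y] by blast
  moreover have "x0 + \<tau> x0 \<in> F0" using nonfixed[OF x0] by blast
  ultimately have "((x + x0) + \<tau> (x + x0)) - (x0 + \<tau> x0) \<in> F0" using subfield_diff[OF sF0] by blast
  hence "2 * x \<in> F0" using tau_add[OF x x0(1)] f by (simp add: algebra_simps)
  hence "(2 * x) / 2 \<in> F0" using subfield_divide[OF sF0 _ subfield_2[OF sF0]] by blast
  thus ?thesis by simp
qed

lemma trace_norm: "x \<in> F \<Longrightarrow> x + \<tau> x \<in> F0 \<and> x * \<tau> x \<in> F0"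
proof (cases "\<tau> x = x")
  case True
  assume x: "x \<in> F"
  hence "x \<in> F0" using fixed True by blast
  thus ?thesis using True subfield_add[OF sF0 \<open>x \<in> F0\<close> \<open>x \<in> F0\<close>] subfield_mult[OF sF0 \<open>x \<in> F0\<close> \<open>x \<in> F0\<close>] by simp
next
  case False
  assume x: "x \<in> F" thus ?thesis using nonfixed False by blast
qed

lemma tau_tau: "x \<in> F \<Longrightarrow> \<tau> (\<tau> x) = x"
proof -
  assume x: "x \<in> F"
  have "\<tau> (x + \<tau> x) = x + \<tau> x" using trace_norm[OF x] tau(3) by blast
  thus ?thesis using tau_add[OF x tauF[OF x]] by simp
qed

lemma F_real: "F \<subseteq> \<real>" using totally_real_sub[OF sF trF] .
lemma F0_real: "F0 \<subseteq> \<real>" using totally_real_sub[OF sF0 trF0] .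

end


context setting begin

abbreviation "\<beta> \<equiv> csqrt \<alpha>"
abbreviation "M \<equiv> adjoin F \<beta>"

lemma M_props: "subfield M" "F \<subseteq> M" "\<beta> \<in> M" using adjoin_sub by auto
lemma beta_sq: "\<beta> * \<beta> = \<alpha>" using power2_csqrt[of \<alpha>] by (simp add: power2_eq_square)

lemma wreal: "w \<in> emb F \<Longrightarrow> x \<in> F \<Longrightarrow> w x \<in> \<real>"
  using trF unfolding totally_real_def real_emb_def by blast

lemma restrictF: "\<sigma> \<in> emb M \<Longrightarrow> restrict \<sigma> F \<in> emb F"
  using restrict_emb[of \<sigma> M F] M_props sF subfield_1 by blast

lemma Memb_real: "\<sigma> \<in> emb M \<Longrightarrow> \<sigma> \<beta> \<in> \<real> \<Longrightarrow> real_emb M \<sigma>"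
proof -
  assume e: "\<sigma> \<in> emb M" and b: "\<sigma> \<beta> \<in> \<real>"
  have "\<forall>x\<in>F. \<sigma> x \<in> \<real>" using wreal[OF restrictF[OF e]] by simp
  hence "\<forall>x\<in>insert \<beta> F. \<sigma> x \<in> \<real>" using b by simp
  thus ?thesis using real_gen[of \<sigma> "insert \<beta> F"] e unfolding adjoin_def by blast
qed

lemma sigma_beta_sq: "\<sigma> \<in> emb M \<Longrightarrow> \<sigma> \<beta> * \<sigma> \<beta> = \<sigma> \<alpha>"
  using emb_mult[of \<sigma> M \<beta> \<beta>] M_props beta_sq by simp

lemma alpha_real: "\<alpha> \<in> \<real>" "Re \<alpha> \<ge> 0"
proof -
  have "\<beta> \<in> \<real>" using M_props Mreal by blast
  thus "\<alpha> \<in> \<real>" "Re \<alpha> \<ge> 0" using real_sq_nonneg[of \<beta>] beta_sq by metis+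
qed

lemma id_not_ext: "\<not> extends_complex F M (restrict (\<lambda>x. x) F)"
proof
  assume "extends_complex F M (restrict (\<lambda>x. x) F)"
  then obtain \<sigma> where s: "\<sigma> \<in> emb M" "restrict \<sigma> F = restrict (\<lambda>x. x) F" "\<not> real_emb M \<sigma>"
    unfolding extends_complex_def by blast
  have "\<sigma> \<alpha> = \<alpha>" using fun_cong[OF s(2), of \<alpha>] alpha by simp
  hence "\<sigma> \<beta> * \<sigma> \<beta> = \<alpha>" using sigma_beta_sq[OF s(1)] by simp
  hence "\<sigma> \<beta> \<in> \<real>" using sq_real_nonneg[of "\<sigma> \<beta>"] alpha_real by metis
  thus False using Memb_real[OF s(1)] s(3) by blast
qed

lemma neg: "w \<in> emb F \<Longrightarrow> w \<noteq> restrict (\<lambda>x. x) F \<Longrightarrow> w \<alpha> \<in> \<real> \<and> Re (w \<alpha>) < 0"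
proof -
  assume w: "w \<in> emb F" and ne: "w \<noteq> restrict (\<lambda>x. x) F"
  have u: "\<exists>!v. v \<in> emb F \<and> \<not> extends_complex F M v" using atc unfolding ATC_def by blast
  have "restrict (\<lambda>x. x) F \<in> emb F" using id_emb[OF sF] .
  hence "extends_complex F M w" using u id_not_ext w ne by blast
  then obtain \<sigma> where s: "\<sigma> \<in> emb M" "restrict \<sigma> F = w" "\<not> real_emb M \<sigma>"
    unfolding extends_complex_def by blast
  have "\<sigma> \<alpha> = w \<alpha>" using s(2) alpha by auto
  hence sq: "\<sigma> \<beta> * \<sigma> \<beta> = w \<alpha>" using sigma_beta_sq[OF s(1)] by simp
  have wr: "w \<alpha> \<in> \<real>" using wreal[OF w alpha] .
  have "\<not> Re (w \<alpha>) \<ge> 0"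
  proof
    assume "Re (w \<alpha>) \<ge> 0"
    hence "\<sigma> \<beta> \<in> \<real>" using sq_real_nonneg[of "\<sigma> \<beta>"] sq wr by metis
    thus False using Memb_real[OF s(1)] s(3) by blast
  qed
  thus ?thesis using wr by simp
qed

lemma tau_ne_id: "\<tau> \<noteq> restrict (\<lambda>x. x) F"
proof
  assume "\<tau> = restrict (\<lambda>x. x) F"
  thus False using tau(4) by auto
qed

lemma tau_alpha: "\<tau> \<alpha> \<in> \<real>" "Re (\<tau> \<alpha>) < 0" using neg[OF tau(1) tau_ne_id] by auto

lemma alpha_pos: "Re \<alpha> > 0"
proof -
  have "\<alpha> \<noteq> 0" using tau_alpha(2) emb_0[OF sF tau(1)] by auto
  hence "Re \<alpha> \<noteq> 0" using alpha_real(1) by (auto elim!: Reals_cases)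
  thus ?thesis using alpha_real(2) by simp
qed

lemma classify: "w \<in> emb F \<Longrightarrow> w = restrict (\<lambda>x. x) F \<or> w = \<tau> \<or>
   (w \<alpha> \<in> \<real> \<and> Re (w \<alpha>) < 0 \<and> w (\<tau> \<alpha>) \<in> \<real> \<and> Re (w (\<tau> \<alpha>)) < 0)"
proof -
  assume w: "w \<in> emb F"
  let ?w' = "restrict (\<lambda>x. w (\<tau> x)) F"
  have w'e: "?w' \<in> emb F"
    unfolding emb_def
  proof (intro CollectI conjI ballI)
    show "?w' \<in> extensional F" by simp
    show "?w' 1 = 1" using subfield_1[OF sF] emb_1[OF tau(1)] emb_1[OF w] by simp
    fix x y assume x: "x \<in> F" and y: "y \<in> F"
    show "?w' (x + y) = ?w' x + ?w' y"
      using x y subfield_add[OF sF x y] tau_add[OF x y] emb_add[OF w tauF[OF x] tauF[OF y]] by simp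
    show "?w' (x * y) = ?w' x * ?w' y"
      using x y subfield_mult[OF sF x y] tau_mult[OF x y] emb_mult[OF w tauF[OF x] tauF[OF y]] by simp
  qed
  show ?thesis
  proof (cases "w = restrict (\<lambda>x. x) F")
    case True thus ?thesis by blast
  next
    case nid: False
    show ?thesis
    proof (cases "?w' = restrict (\<lambda>x. x) F")
      case True
      have "\<forall>x\<in>F. w x = \<tau> x"
      proof
        fix x assume x: "x \<in> F"
        have "?w' (\<tau> x) = \<tau> x" using True tauF[OF x] by simp
        thus "w x = \<tau> x" using tauF[OF x] tau_tau[OF x] by simp
      qed
      hence "w = \<tau>" by (intro extensionalityI[OF emb_ext[OF w] emb_ext[OF tau(1)]]) blast
      thus ?thesis by blast
    next
      case False
      have "?w' \<alpha> \<in> \<real> \<and> Re (?w' \<alpha>) < 0" using neg[OF w'e False] .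
      thus ?thesis using neg[OF w nid] alpha by simp
    qed
  qed
qed

end


context setting begin

abbreviation "\<gamma> \<equiv> csqrt (\<tau> \<alpha>)"
abbreviation "p \<equiv> \<beta> * \<gamma>"
abbreviation "aa \<equiv> \<alpha> + \<tau> \<alpha>"
abbreviation "nn \<equiv> \<alpha> * \<tau> \<alpha>"

definition "dco x = (x - \<tau> x) / (\<alpha> - \<tau> \<alpha>)"
definition "cco x = x - dco x * \<alpha>"

lemma tauF0: "x \<in> F0 \<Longrightarrow> \<tau> x = x" using tau(3) by blast
lemma aa_F0: "aa \<in> F0" and nn_F0: "nn \<in> F0" using trace_norm[OF alpha] by auto
lemma taua: "\<tau> \<alpha> \<in> F" using tauF[OF alpha] .
lemma a_ne: "\<alpha> - \<tau> \<alpha> \<noteq> 0" using alpha_pos tau_alpha(2) by auto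
lemma alpha_sq: "\<alpha> * \<alpha> = aa * \<alpha> - nn" by (simp add: algebra_simps)

lemma dco_F0: "x \<in> F \<Longrightarrow> dco x \<in> F0"
proof -
  assume x: "x \<in> F"
  have u: "x - \<tau> x \<in> F" using subfield_diff[OF sF x tauF[OF x]] .
  have v: "\<alpha> - \<tau> \<alpha> \<in> F" using subfield_diff[OF sF alpha taua] .
  have dF: "dco x \<in> F" unfolding dco_def using subfield_divide[OF sF u v] .
  have "\<tau> (dco x) = \<tau> (x - \<tau> x) * \<tau> (inverse (\<alpha> - \<tau> \<alpha>))"
    unfolding dco_def divide_inverse using tau_mult[OF u subfield_inverse[OF sF v]] .
  also have "\<dots> = (\<tau> x - x) * inverse (\<tau> \<alpha> - \<alpha>)"
    using tau_diff[OF x tauF[OF x]] tau_tau[OF x] emb_inverse[OF sF tau(1) v a_ne]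
      tau_diff[OF alpha taua] tau_tau[OF alpha] by simp
  also have "\<dots> = dco x" unfolding dco_def
    by (metis divide_inverse minus_diff_eq minus_divide_divide)
  finally show ?thesis using fixed[OF dF] by blast
qed

lemma cco_F0: "x \<in> F \<Longrightarrow> cco x \<in> F0"
proof -
  assume x: "x \<in> F"
  have dF: "dco x \<in> F" using dco_F0[OF x] sub by blast
  have cF: "cco x \<in> F" unfolding cco_def using subfield_diff[OF sF x subfield_mult[OF sF dF alpha]] .
  have "\<tau> (cco x) = \<tau> x - dco x * \<tau> \<alpha>"
    unfolding cco_def using tau_diff[OF x subfield_mult[OF sF dF alpha]] tau_mult[OF dF alpha]
      tauF0[OF dco_F0[OF x]] by simp
  also have "\<dots> = cco x"
  proof -
    have "dco x * (\<alpha> - \<tau> \<alpha>) = x - \<tau> x" unfolding dco_def using a_ne by simp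
    thus ?thesis unfolding cco_def by (simp add: algebra_simps)
  qed
  finally show ?thesis using fixed[OF cF] by blast
qed

lemma cd_repr: "x \<in> F \<Longrightarrow> x = cco x + dco x * \<alpha>" unfolding cco_def by simp

lemma cd_uniq: "c0 \<in> F0 \<Longrightarrow> d0 \<in> F0 \<Longrightarrow> dco (c0 + d0 * \<alpha>) = d0 \<and> cco (c0 + d0 * \<alpha>) = c0"
proof -
  assume c: "c0 \<in> F0" and d: "d0 \<in> F0"
  have cF: "c0 \<in> F" and dF: "d0 \<in> F" using c d sub by auto
  have "\<tau> (c0 + d0 * \<alpha>) = c0 + d0 * \<tau> \<alpha>"
    using tau_add[OF cF subfield_mult[OF sF dF alpha]] tau_mult[OF dF alpha] tauF0[OF c] tauF0[OF d] by simp
  hence "dco (c0 + d0 * \<alpha>) = d0 * (\<alpha> - \<tau> \<alpha>) / (\<alpha> - \<tau> \<alpha>)" unfolding dco_def by (simp add: algebra_simps)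
  hence "dco (c0 + d0 * \<alpha>) = d0" using a_ne by simp
  thus ?thesis unfolding cco_def by simp
qed

lemma extend: assumes v: "v \<in> emb F0" and r: "r * r + v nn = v aa * r"
  shows "\<exists>w\<in>emb F. (\<forall>x\<in>F0. w x = v x) \<and> w \<alpha> = r"
proof -
  let ?w = "restrict (\<lambda>x. v (cco x) + v (dco x) * r) F"
  have v0: "v 0 = 0" using emb_0[OF sF0 v] .
  have v1: "v 1 = 1" using emb_1[OF v] .
  have vadd: "\<And>x y. x \<in> F0 \<Longrightarrow> y \<in> F0 \<Longrightarrow> v (x + y) = v x + v y" using emb_add[OF v] .
  have vmult: "\<And>x y. x \<in> F0 \<Longrightarrow> y \<in> F0 \<Longrightarrow> v (x * y) = v x * v y" using emb_mult[OF v] .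
  have vdiff: "\<And>x y. x \<in> F0 \<Longrightarrow> y \<in> F0 \<Longrightarrow> v (x - y) = v x - v y" using emb_diff[OF sF0 v] .
  have add0: "\<And>x y. x \<in> F0 \<Longrightarrow> y \<in> F0 \<Longrightarrow> x + y \<in> F0" using subfield_add[OF sF0] .
  have mult0: "\<And>x y. x \<in> F0 \<Longrightarrow> y \<in> F0 \<Longrightarrow> x * y \<in> F0" using subfield_mult[OF sF0] .
  have diff0: "\<And>x y. x \<in> F0 \<Longrightarrow> y \<in> F0 \<Longrightarrow> x - y \<in> F0" using subfield_diff[OF sF0] .
  have onF0: "\<And>x. x \<in> F0 \<Longrightarrow> dco x = 0 \<and> cco x = x"
    using cd_uniq[of _ 0] subfield_0[OF sF0] by (metis add.right_neutral mult_zero_left)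
  have we: "?w \<in> emb F"
    unfolding emb_def
  proof (intro CollectI conjI ballI)
    show "?w \<in> extensional F" by simp
    show "?w 1 = 1" using onF0[OF subfield_1[OF sF0]] subfield_1[OF sF] v0 v1 by simp
    fix x y assume x: "x \<in> F" and y: "y \<in> F"
    note cx = cco_F0[OF x] and dx = dco_F0[OF x] and cy = cco_F0[OF y] and dy = dco_F0[OF y]
    have "x + y = (cco x + cco y) + (dco x + dco y) * \<alpha>"
      using cd_repr[OF x] cd_repr[OF y] by (simp add: algebra_simps)
    hence u: "dco (x+y) = dco x + dco y \<and> cco (x+y) = cco x + cco y"
      using cd_uniq[OF add0[OF cx cy] add0[OF dx dy]] by simp
    show "?w (x + y) = ?w x + ?w y"
      using x y subfield_add[OF sF x y] u vadd[OF cx cy] vadd[OF dx dy] by (simp add: algebra_simps)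
    let ?C = "cco x * cco y - dco x * dco y * nn"
    let ?D = "cco x * dco y + cco y * dco x + dco x * dco y * aa"
    have "x * y = (cco x + dco x * \<alpha>) * (cco y + dco y * \<alpha>)"
      using cd_repr[OF x] cd_repr[OF y] by simp
    also have "\<dots> = cco x * cco y + (cco x * dco y + cco y * dco x) * \<alpha> + dco x * dco y * (\<alpha> * \<alpha>)"
      by (simp add: algebra_simps)
    also have "\<dots> = ?C + ?D * \<alpha>" unfolding alpha_sq by (simp add: algebra_simps)
    finally have xy: "x * y = ?C + ?D * \<alpha>" .
    have CF: "?C \<in> F0" using diff0[OF mult0[OF cx cy] mult0[OF mult0[OF dx dy] nn_F0]] .
    have DF: "?D \<in> F0" using add0[OF add0[OF mult0[OF cx dy] mult0[OF cy dx]] mult0[OF mult0[OF dx dy] aa_F0]] .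
    have u2: "dco (x*y) = ?D \<and> cco (x*y) = ?C" using cd_uniq[OF CF DF] xy by simp
    have vC: "v ?C = v (cco x) * v (cco y) - v (dco x) * v (dco y) * v nn"
      using vdiff[OF mult0[OF cx cy] mult0[OF mult0[OF dx dy] nn_F0]] vmult[OF cx cy]
        vmult[OF mult0[OF dx dy] nn_F0] vmult[OF dx dy] by simp
    have vD: "v ?D = v (cco x) * v (dco y) + v (cco y) * v (dco x) + v (dco x) * v (dco y) * v aa"
      using vadd[OF add0[OF mult0[OF cx dy] mult0[OF cy dx]] mult0[OF mult0[OF dx dy] aa_F0]]
        vadd[OF mult0[OF cx dy] mult0[OF cy dx]] vmult[OF cx dy] vmult[OF cy dx]
        vmult[OF mult0[OF dx dy] aa_F0] vmult[OF dx dy] by simp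
    have "?w (x * y) = v ?C + v ?D * r" using subfield_mult[OF sF x y] u2 by simp
    also have "\<dots> = v (cco x) * v (cco y) + (v (cco x) * v (dco y) + v (cco y) * v (dco x)) * r
        + v (dco x) * v (dco y) * (v aa * r - v nn)"
      unfolding vC vD by (simp add: algebra_simps)
    also have "\<dots> = v (cco x) * v (cco y) + (v (cco x) * v (dco y) + v (cco y) * v (dco x)) * r
        + v (dco x) * v (dco y) * (r * r)"
      using r by (metis add_diff_cancel_right')
    also have "\<dots> = ?w x * ?w y" using x y by (simp add: algebra_simps)
    finally show "?w (x * y) = ?w x * ?w y" .
  qed
  moreover have "\<forall>x\<in>F0. ?w x = v x" using onF0 sub v0 by auto
  moreover have "?w \<alpha> = r"
    using alpha cd_uniq[of 0 1] subfield_0[OF sF0] subfield_1[OF sF0] v0 v1 by simp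
  ultimately show ?thesis by blast
qed

end



lemma root_exists: "\<exists>r::complex. r * r + c = b * r"
proof -
  define D where "D = csqrt (b * b - 4 * c)"
  have D: "D * D = b * b - 4 * c" unfolding D_def using power2_csqrt[of "b*b - 4*c"] by (simp add: power2_eq_square)
  have "((b + D)/2) * ((b + D)/2) + c - b * ((b + D)/2) = (D * D - b * b + 4 * c) / 4"
    by (simp add: field_simps)
  also have "\<dots> = 0" using D by simp
  finally show ?thesis by (metis eq_iff_diff_eq_0)
qed

lemma Re_mult_real: "z1 \<in> \<real> \<Longrightarrow> z2 \<in> \<real> \<Longrightarrow> Re (z1 * z2) = Re z1 * Re z2"
  by (auto elim!: Reals_cases)

lemma real_quad_zero: fixes a b n :: real assumes "a*a - b*b*n = 0" "n < 0" shows "a = 0 \<and> b = 0"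
proof -
  have "a*a \<ge> 0" by simp
  moreover have "b*b*(-n) \<ge> 0" using mult_nonneg_nonneg[of "b*b" "-n"] assms(2) by simp
  moreover have "a*a + b*b*(-n) = 0" using assms(1) by simp
  ultimately have "a*a = 0" "b*b*(-n) = 0" using \<open>b*b*(-n) \<ge> 0\<close> by linarith+
  thus ?thesis using assms(2) by auto
qed

context setting begin

lemma gamma_sq: "\<gamma> * \<gamma> = \<tau> \<alpha>" using power2_csqrt[of "\<tau> \<alpha>"] by (simp add: power2_eq_square)
lemma p_sq: "p * p = nn" using beta_sq gamma_sq by (simp add: algebra_simps)
lemma nn_real: "nn \<in> \<real>" "Re nn < 0"
proof -
  show "nn \<in> \<real>" using alpha_real(1) tau_alpha(1) by simp
  have "Re nn = Re \<alpha> * Re (\<tau> \<alpha>)" using Re_mult_real alpha_real(1) tau_alpha(1) by blast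
  thus "Re nn < 0" using alpha_pos tau_alpha(2) mult_pos_neg[of "Re \<alpha>" "Re (\<tau> \<alpha>)"] by linarith
qed
lemma p_not_real: "p \<notin> \<real>"
proof
  assume "p \<in> \<real>"
  hence "Re (p * p) \<ge> 0" using real_sq_nonneg by blast
  thus False using p_sq nn_real by simp
qed

abbreviation "K \<equiv> adjoin F0 p"

lemma K_props: "subfield K" "F0 \<subseteq> K" "p \<in> K" using adjoin_sub by auto

lemma F0_of_real: "x \<in> F0 \<Longrightarrow> x = of_real (Re x)" using F0_real by (auto elim!: Reals_cases)

lemma inP: "x \<in> F0 \<Longrightarrow> y \<in> F0 \<Longrightarrow> z = x + y * p \<Longrightarrow> z \<in> {z. \<exists>x y. x \<in> F0 \<and> y \<in> F0 \<and> z = x + y * p}"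
  by blast

lemma K_eq: "K = {z. \<exists>x y. x \<in> F0 \<and> y \<in> F0 \<and> z = x + y * p}" (is "_ = ?P")
proof
  have add0: "\<And>x y. x \<in> F0 \<Longrightarrow> y \<in> F0 \<Longrightarrow> x + y \<in> F0" using subfield_add[OF sF0] .
  have mult0: "\<And>x y. x \<in> F0 \<Longrightarrow> y \<in> F0 \<Longrightarrow> x * y \<in> F0" using subfield_mult[OF sF0] .
  have diff0: "\<And>x y. x \<in> F0 \<Longrightarrow> y \<in> F0 \<Longrightarrow> x - y \<in> F0" using subfield_diff[OF sF0] .
  have sP: "subfield ?P"
    unfolding subfield_def
  proof (intro conjI ballI impI)
    show "0 \<in> ?P" by (rule inP[OF subfield_0[OF sF0] subfield_0[OF sF0]]) simp
    show "1 \<in> ?P" by (rule inP[OF subfield_1[OF sF0] subfield_0[OF sF0]]) simp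
    fix z w assume z: "z \<in> ?P" and w: "w \<in> ?P"
    then obtain x y x' y' where xy: "x \<in> F0" "y \<in> F0" "z = x + y * p" "x' \<in> F0" "y' \<in> F0" "w = x' + y' * p"
      by blast
    have "z + w = (x + x') + (y + y') * p" using xy by (simp add: algebra_simps)
    thus "z + w \<in> ?P" by (rule inP[OF add0[OF xy(1) xy(4)] add0[OF xy(2) xy(5)]])
    have "z * w = (x * x' + y * y' * nn) + (x * y' + x' * y) * p"
      using xy p_sq by (simp add: algebra_simps)
    moreover have "x * x' + y * y' * nn \<in> F0" using add0[OF mult0[OF xy(1) xy(4)] mult0[OF mult0[OF xy(2) xy(5)] nn_F0]] .
    moreover have "x * y' + x' * y \<in> F0" using add0[OF mult0[OF xy(1) xy(5)] mult0[OF xy(4) xy(2)]] .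
    ultimately show "z * w \<in> ?P" using inP by blast
  next
    fix z assume z: "z \<in> ?P"
    then obtain x y where xy: "x \<in> F0" "y \<in> F0" "z = x + y * p" by blast
    have "-z = (-x) + (-y) * p" using xy by simp
    thus "-z \<in> ?P" by (rule inP[OF subfield_uminus[OF sF0 xy(1)] subfield_uminus[OF sF0 xy(2)]])
    assume nz: "z \<noteq> 0"
    define N where "N = x * x - y * y * nn"
    have NF: "N \<in> F0" unfolding N_def using diff0[OF mult0[OF xy(1) xy(1)] mult0[OF mult0[OF xy(2) xy(2)] nn_F0]] .
    have N0: "N \<noteq> 0"
    proof
      assume N: "N = 0"
      obtain x' where x': "x = of_real x'" using F0_real xy(1) by (auto elim!: Reals_cases)
      obtain y' where y': "y = of_real y'" using F0_real xy(2) by (auto elim!: Reals_cases)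
      obtain n' where n': "nn = of_real n'" using nn_real(1) by (auto elim!: Reals_cases)
      have "n' < 0" using nn_real(2) n' by simp
      have "of_real (x' * x' - y' * y' * n') = (0::complex)" using N unfolding N_def x' y' n' by simp
      hence "x' * x' - y' * y' * n' = 0" by (simp only: of_real_eq_0_iff)
      hence "x' = 0 \<and> y' = 0" using real_quad_zero \<open>n' < 0\<close> by blast
      hence "x = 0" "y = 0" using x' y' by simp_all
      thus False using nz xy by simp
    qed
    have "z * ((x - y * p) / N) = (x * x - y * y * (p * p)) / N" using xy by (simp add: algebra_simps)
    also have "\<dots> = 1" using N0 p_sq unfolding N_def by simp
    finally have "inverse z = (x - y * p) / N" by (rule inverse_unique)
    also have "\<dots> = x / N + (- y / N) * p" by (simp add: diff_divide_distrib)
    finally show "inverse z \<in> ?P"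
      by (rule inP[OF subfield_divide[OF sF0 xy(1) NF] subfield_divide[OF sF0 subfield_uminus[OF sF0 xy(2)] NF]])
  qed
  have "insert p F0 \<subseteq> ?P"
  proof
    fix z assume "z \<in> insert p F0"
    thus "z \<in> ?P"
    proof
      assume "z = p" thus ?thesis by (intro inP[OF subfield_0[OF sF0] subfield_1[OF sF0]]) simp
    next
      assume "z \<in> F0" thus ?thesis by (intro inP[OF \<open>z \<in> F0\<close> subfield_0[OF sF0]]) simp
    qed
  qed
  thus "K \<subseteq> ?P" unfolding adjoin_def using gen_field_least[OF sP] by blast
  show "?P \<subseteq> K"
  proof
    fix z assume "z \<in> ?P"
    then obtain x y where xy: "x \<in> F0" "y \<in> F0" "z = x + y * p" by blast
    have "x \<in> K" "y \<in> K" using xy K_props by auto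
    thus "z \<in> K" using xy(3) K_props subfield_add[OF K_props(1)] subfield_mult[OF K_props(1)] by simp
  qed
qed

lemma p_ne_1: "p \<noteq> 1" using p_not_real by auto

lemma K_quad: "quadratic_ext F0 K"
  unfolding quadratic_ext_def ext_degree_def
proof (intro conjI exI)
  show "subfield F0" "subfield K" "F0 \<subseteq> K" using sF0 K_props by auto
  show "card {1, p} = 2" using p_ne_1 by simp
  show "is_basis F0 K {1, p}"
    unfolding is_basis_def
  proof (intro conjI ballI allI impI)
    show "finite {1, p}" by simp
    show "{1, p} \<subseteq> K" using K_props subfield_1 by auto
  next
    fix z assume "z \<in> K"
    then obtain x y where xy: "x \<in> F0" "y \<in> F0" "z = x + y * p" using K_eq by blast
    let ?c = "\<lambda>b::complex. if b = 1 then x else y"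
    have "(\<Sum>b\<in>{1,p}. ?c b * b) = ?c 1 * 1 + ?c p * p" using p_ne_1 by (subst sum.insert) auto
    also have "\<dots> = z" using xy p_ne_1[symmetric] by simp
    finally have cc: "(\<forall>b\<in>{1,p}. ?c b \<in> F0) \<and> z = (\<Sum>b\<in>{1,p}. ?c b * b)" using xy by simp
    thus "\<exists>c. (\<forall>b\<in>{1,p}. c b \<in> F0) \<and> z = (\<Sum>b\<in>{1,p}. c b * b)" by (rule exI[of _ ?c])
  next
    fix c b assume h: "(\<forall>b\<in>{1,p}. c b \<in> F0) \<and> (\<Sum>b\<in>{1,p}. c b * b) = 0" and b: "b \<in> {1,p}"
    have s: "c 1 + c p * p = 0" using h p_ne_1 by (simp add: add.commute)
    have r: "c 1 \<in> \<real>" "c p \<in> \<real>" using h F0_real by auto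
    have cp: "c p = 0"
    proof (rule ccontr)
      assume "c p \<noteq> 0"
      hence "p = - c 1 / c p" using s by (simp add: field_simps eq_neg_iff_add_eq_0)
      moreover have "- c 1 / c p \<in> \<real>" using r by (intro Reals_divide Reals_minus)
      ultimately have "p \<in> \<real>" by metis
      thus False using p_not_real by simp
    qed
    hence "c 1 = 0" using s by simp
    thus "c b = 0" using cp b by auto
  qed
qed

lemma root_w: "v \<in> emb F0 \<Longrightarrow> \<exists>w\<in>emb F. \<forall>x\<in>F0. w x = v x"
  using extend root_exists by blast

lemma w_prod: "w \<in> emb F \<Longrightarrow> w nn = w \<alpha> * w (\<tau> \<alpha>)" using emb_mult[OF _ alpha taua] by blast

lemma idtau_prod: "w \<in> emb F \<Longrightarrow> (w = restrict (\<lambda>x. x) F \<or> w = \<tau>) \<Longrightarrow> w nn = nn \<and> (\<forall>x\<in>F0. w x = x)"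
proof -
  assume w: "w \<in> emb F" and c: "w = restrict (\<lambda>x. x) F \<or> w = \<tau>"
  show ?thesis using c
  proof
    assume "w = restrict (\<lambda>x. x) F" thus ?thesis using alpha taua sub subfield_mult[OF sF alpha taua] by auto
  next
    assume "w = \<tau>" thus ?thesis using w_prod[OF w] tau_tau[OF alpha] tauF0 by (simp add: mult.commute)
  qed
qed

end


context setting begin

lemma real_of: "z \<in> \<real> \<Longrightarrow> \<exists>r. z = of_real r" by (auto elim!: Reals_cases)

lemma K_ATR: "ATR F0 K"
  unfolding ATR_def
proof (intro conjI trF0 K_quad ex1I)
  let ?v0 = "restrict (\<lambda>x. x) F0"
  show "?v0 \<in> emb F0" using id_emb[OF sF0] .
  show "extends_complex F0 K ?v0"
    unfolding extends_complex_def
  proof (intro bexI conjI)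
    show "restrict (\<lambda>x. x) K \<in> emb K" using id_emb[OF K_props(1)] .
    show "restrict (restrict (\<lambda>x. x) K) F0 = ?v0" using K_props(2) by (auto simp: fun_eq_iff)
    show "\<not> real_emb K (restrict (\<lambda>x. x) K)" using K_props(3) p_not_real unfolding real_emb_def by auto
  qed
  fix v assume "v \<in> emb F0 \<and> extends_complex F0 K v"
  hence v: "v \<in> emb F0" and "extends_complex F0 K v" by auto
  then obtain \<sigma> where s: "\<sigma> \<in> emb K" "restrict \<sigma> F0 = v" "\<not> real_emb K \<sigma>"
    unfolding extends_complex_def by blast
  have sv: "\<And>x. x \<in> F0 \<Longrightarrow> \<sigma> x = v x" using s(2) by auto
  have vr: "\<And>x. x \<in> F0 \<Longrightarrow> v x \<in> \<real>" using trF0 v unfolding totally_real_def real_emb_def by blast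
  have "\<sigma> p \<notin> \<real>"
  proof
    assume "\<sigma> p \<in> \<real>"
    hence "\<forall>x\<in>insert p F0. \<sigma> x \<in> \<real>" using sv vr by auto
    hence "real_emb K \<sigma>" using real_gen[of \<sigma> "insert p F0"] s(1) unfolding adjoin_def by blast
    thus False using s(3) by blast
  qed
  moreover have sq: "\<sigma> p * \<sigma> p = v nn"
    using emb_mult[OF s(1) K_props(3) K_props(3)] p_sq sv[OF nn_F0] by simp
  ultimately have neg: "Re (v nn) < 0" using sq_real_nonneg[of "\<sigma> p"] vr[OF nn_F0] by force
  obtain r where "r * r + v nn = v aa * r" using root_exists by blast
  then obtain w where w: "w \<in> emb F" "\<forall>x\<in>F0. w x = v x" "w \<alpha> = r" using extend[OF v] by blast
  have wn: "w nn = v nn" using w(2) nn_F0 by blast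
  have "w = restrict (\<lambda>x. x) F \<or> w = \<tau>"
  proof (rule ccontr)
    assume "\<not> ?thesis"
    hence c: "w \<alpha> \<in> \<real>" "Re (w \<alpha>) < 0" "w (\<tau> \<alpha>) \<in> \<real>" "Re (w (\<tau> \<alpha>)) < 0" using classify[OF w(1)] by blast+
    have "Re (v nn) = Re (w \<alpha>) * Re (w (\<tau> \<alpha>))" using wn w_prod[OF w(1)] Re_mult_real[OF c(1) c(3)] by simp
    moreover have "Re (w \<alpha>) * Re (w (\<tau> \<alpha>)) > 0" using c(2) c(4) by (simp add: mult_neg_neg)
    ultimately show False using neg by simp
  qed
  hence "\<forall>x\<in>F0. w x = x" using idtau_prod[OF w(1)] by blast
  hence "\<forall>x\<in>F0. v x = ?v0 x" using w(2) by simp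
  thus "v = ?v0" by (intro extensionalityI[OF emb_ext[OF v]]) auto
qed

lemma K_nonreal: "\<not> K \<subseteq> \<real>" using K_props(3) p_not_real by blast

lemma timag:
  assumes e: "e = 1 \<or> e = -1" and qq: "q * q = aa + of_real (2 * e) * p"
  shows "totally_imaginary (adjoin K q)"
  unfolding totally_imaginary_def
proof (intro ballI notI)
  let ?L = "adjoin K q"
  fix \<sigma> assume s: "\<sigma> \<in> emb ?L" and re: "real_emb ?L \<sigma>"
  have sL: "subfield ?L" and KL: "K \<subseteq> ?L" and qL: "q \<in> ?L" using adjoin_sub by auto
  have F0L: "F0 \<subseteq> ?L" using KL K_props by blast
  have pL: "p \<in> ?L" using KL K_props by blast
  have v: "restrict \<sigma> F0 \<in> emb F0" using restrict_emb[OF s F0L subfield_1[OF sF0] sF0] .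
  have sp: "\<sigma> p \<in> \<real>" and sq: "\<sigma> q \<in> \<real>" using re pL qL unfolding real_emb_def by auto
  have spp: "\<sigma> p * \<sigma> p = \<sigma> nn" using emb_mult[OF s pL pL] p_sq by simp
  obtain r where "r * r + restrict \<sigma> F0 nn = restrict \<sigma> F0 aa * r" using root_exists by blast
  then obtain w where w: "w \<in> emb F" "\<forall>x\<in>F0. w x = restrict \<sigma> F0 x" "w \<alpha> = r" using extend[OF v] by blast
  have wn: "w nn = \<sigma> nn" and wa: "w aa = \<sigma> aa" using w(2) nn_F0 aa_F0 by auto
  have "\<not> (w = restrict (\<lambda>x. x) F \<or> w = \<tau>)"
  proof
    assume "w = restrict (\<lambda>x. x) F \<or> w = \<tau>"
    hence "w nn = nn" using idtau_prod[OF w(1)] by blast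
    hence "\<sigma> p * \<sigma> p = nn" using wn spp by simp
    moreover have "Re (\<sigma> p * \<sigma> p) \<ge> 0" using real_sq_nonneg[OF sp] by blast
    ultimately show False using nn_real(2) by simp
  qed
  hence c: "w \<alpha> \<in> \<real>" "Re (w \<alpha>) < 0" "w (\<tau> \<alpha>) \<in> \<real>" "Re (w (\<tau> \<alpha>)) < 0" using classify[OF w(1)] by blast+
  obtain r1 where r1: "w \<alpha> = of_real r1" using real_of[OF c(1)] by blast
  obtain r2 where r2: "w (\<tau> \<alpha>) = of_real r2" using real_of[OF c(3)] by blast
  obtain s0 where s0: "\<sigma> p = of_real s0" using real_of[OF sp] by blast
  obtain t0 where t0: "\<sigma> q = of_real t0" using real_of[OF sq] by blast
  have r1n: "r1 < 0" and r2n: "r2 < 0" using c(2) c(4) r1 r2 by auto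
  have "w aa = w \<alpha> + w (\<tau> \<alpha>)" using emb_add[OF w(1) alpha taua] .
  hence saa: "\<sigma> aa = of_real (r1 + r2)" using wa r1 r2 by simp
  have "w nn = w \<alpha> * w (\<tau> \<alpha>)" using w_prod[OF w(1)] .
  hence "of_real (s0 * s0) = (of_real (r1 * r2) :: complex)" using wn spp s0 r1 r2 by simp
  hence ss: "s0 * s0 = r1 * r2" by (simp only: of_real_eq_iff)
  have e2F0: "of_real (2 * e) \<in> F0" and e2: "\<sigma> (of_real (2 * e)) = of_real (2 * e)"
  proof -
    have two: "\<sigma> 2 = 2" using emb_add[OF s subfield_1[OF sL] subfield_1[OF sL]] emb_1[OF s] by (simp add: one_add_one)
    show "of_real (2 * e) \<in> F0" using e subfield_2[OF sF0] subfield_uminus[OF sF0 subfield_2[OF sF0]] by auto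
    show "\<sigma> (of_real (2 * e)) = of_real (2 * e)" using e two emb_uminus[OF sL s subfield_2[OF sL]] by auto
  qed
  have "\<sigma> q * \<sigma> q = \<sigma> (q * q)" using emb_mult[OF s qL qL] by simp
  also have "\<dots> = \<sigma> aa + \<sigma> (of_real (2 * e)) * \<sigma> p"
    unfolding qq using emb_add[OF s _ subfield_mult[OF sL _ pL]] emb_mult[OF s _ pL] e2F0 F0L aa_F0 by auto
  finally have "of_real (t0 * t0) = (of_real (r1 + r2 + 2 * (e * s0)) :: complex)" using saa e2 s0 t0 by simp
  hence "t0 * t0 = r1 + r2 + 2 * (e * s0)" by (simp only: of_real_eq_iff)
  hence ge: "r1 + r2 + 2 * (e * s0) \<ge> 0" by (metis zero_le_square)
  have "(e * s0) * (e * s0) = r1 * r2" using ss e by auto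
  hence "r1 = r2" using neg_arith[OF r1n r2n _ ge] by blast
  hence "w \<alpha> = w (\<tau> \<alpha>)" using r1 r2 by simp
  hence "\<alpha> = \<tau> \<alpha>" using emb_inj[OF sF w(1) alpha taua] by blast
  thus False using a_ne by simp
qed

lemma L_imag: "totally_imaginary (adjoin K (\<beta> + \<gamma>))"
  by (rule timag[of 1]) (auto simp: beta_sq gamma_sq algebra_simps)
lemma L'_imag: "totally_imaginary (adjoin K (\<beta> - \<gamma>))"
  by (rule timag[of "-1"]) (auto simp: beta_sq gamma_sq algebra_simps)

end


theorem mainTheorem2:
  fixes F0 F :: "complex set" and r :: nat
    and \<tau> :: "complex \<Rightarrow> complex" and \<alpha> :: complex
  assumes F0: "number_field F0 r" "totally_real F0"
    and F: "quadratic_ext F0 F" "totally_real F"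
    and tau: "\<tau> \<in> emb F" "\<tau> ` F = F" "\<forall>x\<in>F0. \<tau> x = x" "\<exists>x\<in>F. \<tau> x \<noteq> x"
    and alpha: "\<alpha> \<in> F"
    and M: "ATC F (adjoin F (csqrt \<alpha>))" "adjoin F (csqrt \<alpha>) \<subseteq> \<real>"
  shows "ATR F0 (adjoin F0 (csqrt \<alpha> * csqrt (\<tau> \<alpha>))) \<and>
         \<not> adjoin F0 (csqrt \<alpha> * csqrt (\<tau> \<alpha>)) \<subseteq> \<real> \<and>
         totally_imaginary (adjoin (adjoin F0 (csqrt \<alpha> * csqrt (\<tau> \<alpha>))) (csqrt \<alpha> + csqrt (\<tau> \<alpha>))) \<and>
         totally_imaginary (adjoin (adjoin F0 (csqrt \<alpha> * csqrt (\<tau> \<alpha>))) (csqrt \<alpha> - csqrt (\<tau> \<alpha>)))"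
proof -
  have sF0: "subfield F0" using F0(1) unfolding number_field_def ext_degree_def by blast
  have qF: "subfield F" "F0 \<subseteq> F" "\<exists>B. is_basis F0 F B \<and> card B = 2"
    using F(1) unfolding quadratic_ext_def ext_degree_def by blast+
  interpret setting F0 F \<tau> \<alpha>
    using sF0 qF F0(2) F(2) tau alpha M by unfold_locales blast+
  show ?thesis using K_ATR K_nonreal L_imag L'_imag by blast
qed

end
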